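(* Let $R=\mathbb{C}[\alpha,\beta,\gamma,\delta]$ and let $G_0,\dots,G_b$ be a basis of a subspace $V_b\subseteq\mathbb{C}[s,t]_d$. Let $\mathcal{M}$ be the $(b+1)\times(d+1)$ matrix over $R$ whose $i$-th row consists of the coefficients, with respect to the monomials $s^d,s^{d-1}t,\dots,t^d$, of $G_i(\alpha s+\beta t,\gamma s+\delta t)$, and let $M\subseteq R(d)^{b+1}$ be the graded submodule generated by the columns of $\mathcal{M}$. Let $\mathrm{PGL}(2,\mathbb{C})$ act on $\mathbb{P}^3$ from the right by $\begin{pmatrix}\alpha&\beta\\\gamma&\delta\end{pmatrix}\mapsto\begin{pmatrix}\alpha&\beta\\\gamma&\delta\end{pmatrix}\cdot\sigma$, and consider the induced action on $R(d)^{b+1}$ (by the corresponding linear substitution of the variables $\alpha,\beta,\gamma,\delta$ in each coordinate). Then this right action preserves the submodule $M$.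
   Context: Points of $\mathbb{P}^3$ with coordinates $(\alpha:\beta:\gamma:\delta)$ are identified with classes of $2\times 2$ matrices $\begin{pmatrix}\alpha&\beta\\\gamma&\delta\end{pmatrix}$. $R(d)$ denotes $R$ with grading shifted by $d$. *)

theory Defs
  imports "HOL-Analysis.Analysis" "HOL-Computational_Algebra.Polynomial"
begin

text \<open>Points (alpha:beta:gamma:delta) are 2x2 matrices A with A$1$1 = alpha, A$1$2 = beta,
  A$2$1 = gamma, A$2$2 = delta.  The ring R = C[alpha,beta,gamma,delta] is modelled by the
  ring of polynomial functions on 2x2 complex matrices (isomorphic to R since C is infinite).\<close>

inductive_set polyfun :: "(complex^2^2 \<Rightarrow> complex) set" where
  pf_const: "(\<lambda>A. c) \<in> polyfun"
| pf_var: "(\<lambda>A. A $ i $ j) \<in> polyfun"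
| pf_add: "f \<in> polyfun \<Longrightarrow> g \<in> polyfun \<Longrightarrow> (\<lambda>A. f A + g A) \<in> polyfun"
| pf_mult: "f \<in> polyfun \<Longrightarrow> g \<in> polyfun \<Longrightarrow> (\<lambda>A. f A * g A) \<in> polyfun"

text \<open>A binary form G of degree d is given by coefficients: G(s,t) = sum_{j<=d} c j s^(d-j) t^j.
  The coefficient of s^(d-k) t^k in G(alpha s + beta t, gamma s + delta t) is computed after
  dehomogenising (s = 1), which is exact because the substituted form is homogeneous of degree d.\<close>

definition subst_coeff :: "(nat \<Rightarrow> complex) \<Rightarrow> nat \<Rightarrow> nat \<Rightarrow> complex^2^2 \<Rightarrow> complex" where
  "subst_coeff c d k A =
     coeff (\<Sum>j\<le>d. smult (c j) ([:A$1$1, A$1$2:] ^ (d - j) * [:A$2$1, A$2$2:] ^ j)) k"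

definition Mmat :: "(nat \<Rightarrow> nat \<Rightarrow> complex) \<Rightarrow> nat \<Rightarrow> nat \<Rightarrow> nat \<Rightarrow> complex^2^2 \<Rightarrow> complex" where
  "Mmat G d i k = subst_coeff (G i) d k"

definition colmodule :: "(nat \<Rightarrow> nat \<Rightarrow> complex) \<Rightarrow> nat \<Rightarrow> nat \<Rightarrow> (nat \<Rightarrow> complex^2^2 \<Rightarrow> complex) set" where
  "colmodule G b d = {v. \<exists>r. (\<forall>k\<le>d. r k \<in> polyfun) \<and>
       (\<forall>i\<le>b. v i = (\<lambda>A. \<Sum>k\<le>d. r k A * Mmat G d i k A))}"

definition right_act :: "complex^2^2 \<Rightarrow> (nat \<Rightarrow> complex^2^2 \<Rightarrow> complex) \<Rightarrow> (nat \<Rightarrow> complex^2^2 \<Rightarrow> complex)" where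
  "right_act \<sigma> v = (\<lambda>i A. v i (A ** \<sigma>))"

end

theory Submission
  imports Defs
begin

definition homf :: "nat \<Rightarrow> 'a::comm_ring_1 poly \<Rightarrow> 'a poly \<Rightarrow> 'a poly \<Rightarrow> 'a poly" where
  "homf n q u w = (\<Sum>l\<le>n. smult (coeff q l) (u^(n-l) * w^l))"

lemma homf_add: "homf n (p + q) u w = homf n p u w + homf n q u w"
  by (simp add: homf_def sum.distrib smult_add_left)

lemma smult_sum_right: "smult a (\<Sum>i\<in>S. f i) = (\<Sum>i\<in>S. smult a (f i))"
  by (induction S rule: infinite_finite_induct) (auto simp: smult_add_right)

lemma homf_smult: "homf n (smult a p) u w = smult a (homf n p u w)"
  by (simp add: homf_def smult_sum_right)

lemma homf_zero[simp]: "homf n 0 u w = 0"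
  by (simp add: homf_def)

lemma homf_sum: "homf n (\<Sum>j\<in>S. f j) u w = (\<Sum>j\<in>S. homf n (f j) u w)"
  by (induction S rule: infinite_finite_induct) (auto simp: homf_add)

lemma homf_Suc_u: "degree q \<le> n \<Longrightarrow> homf (Suc n) q u w = u * homf n q u w"
proof -
  assume "degree q \<le> n"
  then have c0: "coeff q (Suc n) = 0" by (simp add: coeff_eq_0)
  have "homf (Suc n) q u w = (\<Sum>l\<le>n. smult (coeff q l) (u^(Suc n-l) * w^l))"
    unfolding homf_def by (simp only: sum.atMost_Suc c0 smult_0_left add_0_right)
  also have "\<dots> = (\<Sum>l\<le>n. u * smult (coeff q l) (u^(n-l) * w^l))"
  proof (rule sum.cong)
    fix l assume "l \<in> {..n}"
    then have "Suc n - l = Suc (n - l)" by auto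
    then show "smult (coeff q l) (u^(Suc n-l) * w^l) = u * smult (coeff q l) (u^(n-l) * w^l)"
      by (simp only: power_Suc mult_smult_right mult.assoc)
  qed simp
  also have "\<dots> = u * homf n q u w"
    unfolding homf_def by (simp only: sum_distrib_left)
  finally show ?thesis .
qed

lemma homf_u_pow: "degree q \<le> n \<Longrightarrow> homf (n + m) q u w = u^m * homf n q u w"
  by (induction m) (auto simp: homf_Suc_u mult.assoc)

lemma homf_pCons0: "homf (Suc n) (pCons 0 q) u w = w * homf n q u w"
proof -
  have "homf (Suc n) (pCons 0 q) u w = (\<Sum>i\<le>n. smult (coeff q i) (u^(n-i) * w^(Suc i)))"
    unfolding homf_def by (simp only: sum.atMost_Suc_shift coeff_pCons_0 coeff_pCons_Suc
       smult_0_left add_0_left diff_Suc_Suc)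
  also have "\<dots> = (\<Sum>i\<le>n. w * smult (coeff q i) (u^(n-i) * w^i))"
    by (rule sum.cong) (simp_all only: power_Suc mult_smult_right mult.left_commute)
  also have "\<dots> = w * homf n q u w"
    unfolding homf_def by (simp only: sum_distrib_left)
  finally show ?thesis .
qed

lemma homf_const0: "homf 0 [:a:] u w = [:a:]"
  by (simp add: homf_def)

lemma homf_const: "homf n [:a:] u w = smult a (u^n)"
  using homf_u_pow[of "[:a:]" 0 n u w] by (simp add: homf_const0)

lemma homf_mult: "degree p \<le> m \<Longrightarrow> degree q \<le> n \<Longrightarrow>
    homf (m + n) (p * q) u w = homf m p u w * homf n q u w"
proof (induction p arbitrary: m rule: pCons_induct)
  case 0
  then show ?case by simp
next
  case (pCons a p)
  show ?case
  proof (cases m)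
    case 0
    with pCons have "p = 0" by (auto split: if_splits)
    then show ?thesis using 0 by (simp add: homf_smult homf_const0)
  next
    case (Suc m')
    with pCons have dp: "degree p \<le> m'" by (auto split: if_splits)
    have "homf (m + n) (pCons a p * q) u w
        = smult a (homf (n + m) q u w) + homf (Suc (m' + n)) (pCons 0 (p * q)) u w"
      using Suc by (simp add: homf_add homf_smult add.commute)
    also have "\<dots> = smult a (u^m * homf n q u w) + w * (homf m' p u w * homf n q u w)"
      using pCons.IH[OF dp pCons.prems(2)] homf_u_pow[OF pCons.prems(2)]
      by (simp add: homf_pCons0)
    also have "\<dots> = (smult a (u^m) + w * homf m' p u w) * homf n q u w"
      by (simp add: algebra_simps)
    also have "smult a (u^m) + w * homf m' p u w = homf m (pCons a p) u w"
    proof -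
      have "pCons a p = [:a:] + pCons 0 p" by simp
      then show ?thesis using Suc by (metis homf_add homf_const homf_pCons0)
    qed
    finally show ?thesis .
  qed
qed

lemma homf_pow: "degree p \<le> 1 \<Longrightarrow> homf k (p^k) u w = (homf 1 p u w)^k"
proof (induction k)
  case 0
  then show ?case by (simp add: homf_def)
next
  case (Suc k)
  have "degree p * k \<le> 1 * k" using mult_le_mono1[OF Suc.prems] .
  then have "degree (p^k) \<le> k" using degree_power_le[of p k] by linarith
  then have "homf (1 + k) (p * p^k) u w = homf 1 p u w * homf k (p^k) u w"
    using homf_mult Suc.prems by blast
  then show ?case using Suc by simp
qed

lemma homf1: "homf 1 [:a,b:] u w = smult a u + smult b w"
  by (simp add: homf_def)

lemma homf_term: "j \<le> d \<Longrightarrow> homf d ([:a,b:]^(d-j) * [:c,e:]^j) u w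
   = (smult a u + smult b w)^(d-j) * (smult c u + smult e w)^j"
proof -
  assume j: "j \<le> d"
  have d1: "degree ([:a,b:]^(d-j)) \<le> d - j"
    using degree_power_le[of "[:a,b:]" "d-j"] by (simp add: order_trans)
  have d2: "degree ([:c,e:]^j) \<le> j"
    using degree_power_le[of "[:c,e:]" "j"] by (simp add: order_trans)
  have "homf ((d-j) + j) ([:a,b:]^(d-j) * [:c,e:]^j) u w
      = homf (d-j) ([:a,b:]^(d-j)) u w * homf j ([:c,e:]^j) u w"
    by (rule homf_mult[OF d1 d2])
  also have "\<dots> = (smult a u + smult b w)^(d-j) * (smult c u + smult e w)^j"
    using homf_pow[of "[:a,b:]" "d-j" u w] homf_pow[of "[:c,e:]" j u w]
      homf1[of a b u w] homf1[of c e u w] by simp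
  finally show ?thesis using j by simp
qed

lemma mm11: "(A ** (\<sigma>::complex^2^2)) $ i $ j = A$i$1 * \<sigma>$1$j + A$i$2 * \<sigma>$2$j"
  by (simp add: matrix_matrix_mult_def sum_2)

lemma key:
  fixes \<sigma> :: "complex^2^2"
  defines "u \<equiv> [:\<sigma>$1$1, \<sigma>$1$2:]" and "w \<equiv> [:\<sigma>$2$1, \<sigma>$2$2:]"
  shows "subst_coeff c d k (A ** \<sigma>) = (\<Sum>l\<le>d. subst_coeff c d l A * coeff (u^(d-l)*w^l) k)"
proof -
  define P where "P B = (\<Sum>j\<le>d. smult (c j) ([:B$1$1, B$1$2:] ^ (d - j) * [:B$2$1, B$2$2:] ^ j))"
    for B :: "complex^2^2"
  have r1: "[:(A ** \<sigma>)$1$1, (A ** \<sigma>)$1$2:] = smult (A$1$1) u + smult (A$1$2) w"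
    by (simp add: mm11 u_def w_def algebra_simps)
  have r2: "[:(A ** \<sigma>)$2$1, (A ** \<sigma>)$2$2:] = smult (A$2$1) u + smult (A$2$2) w"
    by (simp add: mm11 u_def w_def algebra_simps)
  have "P (A ** \<sigma>) = homf d (P A) u w"
    unfolding P_def homf_sum homf_smult r1 r2
    by (rule sum.cong) (simp_all add: homf_term)
  then have "coeff (P (A ** \<sigma>)) k = (\<Sum>l\<le>d. coeff (P A) l * coeff (u^(d-l)*w^l) k)"
    by (simp add: homf_def coeff_sum)
  then show ?thesis by (simp add: subst_coeff_def P_def)
qed

lemma pf_sum: "finite S \<Longrightarrow> (\<forall>x\<in>S. f x \<in> polyfun) \<Longrightarrow> (\<lambda>A. \<Sum>x\<in>S. f x A) \<in> polyfun"
proof (induction S rule: finite_induct)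
  case empty
  then show ?case using pf_const[of 0] by simp
next
  case (insert x F)
  then show ?case using pf_add[of "f x" "\<lambda>A. \<Sum>x\<in>F. f x A"] by simp
qed

lemma pf_subst: "f \<in> polyfun \<Longrightarrow> (\<lambda>A. f (A ** \<sigma>)) \<in> polyfun"
proof (induction rule: polyfun.induct)
  case (pf_const c)
  then show ?case by (rule polyfun.pf_const)
next
  case (pf_var i j)
  have "(\<lambda>A. (\<Sum>k\<in>UNIV. (\<lambda>k A. A$i$k * \<sigma>$k$j) k A)) \<in> polyfun"
    by (rule pf_sum) (auto intro: polyfun.intros)
  then show ?case by (simp add: matrix_matrix_mult_def)
next
  case (pf_add f g)
  then show ?case by (simp add: polyfun.pf_add)
next
  case (pf_mult f g)
  then show ?case by (simp add: polyfun.pf_mult)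
qed

theorem lemma3p2:
  fixes G :: "nat \<Rightarrow> nat \<Rightarrow> complex" and b d :: nat and \<sigma> :: "complex^2^2"
  assumes basis: "\<forall>a :: nat \<Rightarrow> complex. (\<forall>k\<le>d. (\<Sum>i\<le>b. a i * G i k) = 0) \<longrightarrow> (\<forall>i\<le>b. a i = 0)"
    and inv: "invertible \<sigma>"
    and v: "v \<in> colmodule G b d"
  shows "right_act \<sigma> v \<in> colmodule G b d"
proof -
  obtain r where r: "\<forall>k\<le>d. r k \<in> polyfun"
    and vi: "\<forall>i\<le>b. v i = (\<lambda>A. \<Sum>k\<le>d. r k A * Mmat G d i k A)"
    using v unfolding colmodule_def by blast
  define u where "u = [:\<sigma>$1$1, \<sigma>$1$2:]"
  define w where "w = [:\<sigma>$2$1, \<sigma>$2$2:]"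
  define C where "C l k = coeff (u^(d-l)*w^l) k" for l k
  define r' where "r' l = (\<lambda>A. \<Sum>k\<le>d. C l k * r k (A ** \<sigma>))" for l
  have r': "\<forall>l\<le>d. r' l \<in> polyfun"
  proof (intro allI impI)
    fix l
    have "(\<lambda>A. \<Sum>k\<in>{..d}. (\<lambda>k A. C l k * r k (A ** \<sigma>)) k A) \<in> polyfun"
      by (rule pf_sum) (auto intro!: polyfun.pf_mult polyfun.pf_const pf_subst r[rule_format])
    then show "r' l \<in> polyfun" by (simp add: r'_def)
  qed
  have "\<forall>i\<le>b. right_act \<sigma> v i = (\<lambda>A. \<Sum>l\<le>d. r' l A * Mmat G d i l A)"
  proof (intro allI impI ext)
    fix i A assume i: "i \<le> b"
    have "right_act \<sigma> v i A = (\<Sum>k\<le>d. r k (A ** \<sigma>) * (\<Sum>l\<le>d. Mmat G d i l A * C l k))"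
      using vi i unfolding right_act_def Mmat_def C_def u_def w_def by (simp only: key)
    also have "\<dots> = (\<Sum>k\<le>d. \<Sum>l\<le>d. C l k * r k (A ** \<sigma>) * Mmat G d i l A)"
      unfolding sum_distrib_left
      by (intro sum.cong refl) (simp only: mult.commute mult.left_commute mult.assoc)
    also have "\<dots> = (\<Sum>l\<le>d. \<Sum>k\<le>d. C l k * r k (A ** \<sigma>) * Mmat G d i l A)"
      by (rule sum.swap)
    also have "\<dots> = (\<Sum>l\<le>d. r' l A * Mmat G d i l A)"
      unfolding r'_def sum_distrib_right ..
    finally show "right_act \<sigma> v i A = (\<Sum>l\<le>d. r' l A * Mmat G d i l A)" .
  qed
  then show ?thesis using r' unfolding colmodule_def by blast
qed

end
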